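(* Let $t\in\mathbb{R}$, $q$ sufficiently large, and $0<k<1$, with all objects as in the context. Then \begin{align*} \sum_{\chi\bmod q}^{*}|L(\tfrac12+it,f\otimes\chi)|^{2k}\ll&\Big(\sum_{\chi\bmod q}^{*}|L(\tfrac12+it,f\otimes\chi)|^2\sum_{v=0}^{R}\Big(\prod_{j=1}^{v}|\mathcal{N}_j(t,\chi,k-1)|^2\Big)|\mathcal{Q}_{v+1}(t,\chi,k)|^2\Big)^{k}\\ &\times\Big(\sum_{\chi\bmod q}^{*}\sum_{v=0}^{R}\Big(\prod_{j=1}^{v}|\mathcal{N}_j(t,\chi,k)|^2\Big)|\mathcal{Q}_{v+1}(t,\chi,k)|^2\Big)^{1-k}, \end{align*} with implied constant depending only on $k$ (and $f$).
   Context: $f$ is a fixed holomorphic Hecke eigenform of even weight $\kappa$, level $1$, normalized Hecke eigenvalues $\lambda_f(n)$; $L(s,f\otimes\chi)=\sum_n\lambda_f(n)\chi(n)n^{-s}$ (entire continuation) for $\chi$ primitive mod $q$, $q\not\equiv2\pmod4$; $\sum^*_{\chi\bmod q}$ is the sum over primitive characters mod $q$. Fix $k>0$, $k\ne1$, and natural numbers $N,M$ large enough depending on $k$. Let $\ell_1=2\lceil N\log\log q\rceil$ and $\ell_{j+1}=2\lceil N\log\ell_j\rceil$ for $j\ge1$, and let $R$ be the largest natural number with $\ell_R>10^M$. Let $P_1$ be the set of odd primes $\le q^{1/\ell_1^2}$ and, for $2\le j\le R$, $P_j$ the set of primes in $(q^{1/\ell_{j-1}^2},q^{1/\ell_j^2}]$.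 Define $\mathcal{P}_j(t,\chi)=\sum_{p\in P_j}\lambda_f(p)\chi(p)p^{-1/2-it}$ and $\mathcal{Q}_j(t,\chi,k)=\big(c_k\mathcal{P}_j(t,\chi)/\ell_j\big)^{r_k\ell_j}$ for $1\le j\le R$, with $\mathcal{Q}_{R+1}(t,\chi,k)=1$, where $c_k=64\max(1,k)$, $r_k=2$ if $k>1$ and $r_k=\lceil1+1/k\rceil+1$ if $k<1$. For $\ell\ge0$, $E_\ell(x)=\sum_{j=0}^{\ell}x^j/j!$; for real $\alpha$, $\mathcal{N}_j(t,\chi,\alpha)=E_{\ell_j}(\alpha\mathcal{P}_j(t,\chi))$ and $\mathcal{N}(t,\chi,\alpha)=\prod_{j=1}^R\mathcal{N}_j(t,\chi,\alpha)$. Empty products equal $1$. *)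

theory Defs
  imports "HOL-Analysis.Analysis" "HOL-Number_Theory.Number_Theory"
begin

definition upper_half :: "complex set" where
  "upper_half = {z. Im z > 0}"

definition cusp_form :: "nat \<Rightarrow> (complex \<Rightarrow> complex) \<Rightarrow> (nat \<Rightarrow> complex) \<Rightarrow> bool" where
  "cusp_form \<kappa> f a \<longleftrightarrow>
     f holomorphic_on upper_half \<and>
     (\<forall>z\<in>upper_half. f (z + 1) = f z \<and> f (- 1 / z) = z ^ \<kappa> * f z) \<and>
     (\<forall>z\<in>upper_half. (\<lambda>n. a n * exp (2 * of_real pi * \<i> * of_nat n * z)) sums f z) \<and>
     a 0 = 0"

definition hecke_op :: "nat \<Rightarrow> nat \<Rightarrow> (complex \<Rightarrow> complex) \<Rightarrow> complex \<Rightarrow> complex" where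
  "hecke_op \<kappa> n f z = of_nat n ^ (\<kappa> - 1) *
     (\<Sum>(a, d) \<in> {(a, d). a * d = n}. \<Sum>b<d.
        f ((of_nat a * z + of_nat b) / of_nat d) / of_nat d ^ \<kappa>)"

definition normalized_hecke_eigenform ::
  "nat \<Rightarrow> (complex \<Rightarrow> complex) \<Rightarrow> (nat \<Rightarrow> complex) \<Rightarrow> bool" where
  "normalized_hecke_eigenform \<kappa> f a \<longleftrightarrow>
     cusp_form \<kappa> f a \<and>
     (\<forall>n\<ge>1. \<exists>c. \<forall>z\<in>upper_half. hecke_op \<kappa> n f z = c * f z) \<and>
     a 1 = 1"

definition hecke_lambda :: "nat \<Rightarrow> (nat \<Rightarrow> complex) \<Rightarrow> nat \<Rightarrow> complex" where
  "hecke_lambda \<kappa> a n = a n / of_real (real n powr ((real \<kappa> - 1) / 2))"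

definition dirichlet_char :: "nat \<Rightarrow> (nat \<Rightarrow> complex) \<Rightarrow> bool" where
  "dirichlet_char q chi \<longleftrightarrow> q \<ge> 1 \<and>
     (\<forall>n. chi (n + q) = chi n) \<and>
     (\<forall>m n. chi (m * n) = chi m * chi n) \<and>
     (\<forall>n. chi n \<noteq> 0 \<longleftrightarrow> coprime n q)"

definition primitive_char :: "nat \<Rightarrow> (nat \<Rightarrow> complex) \<Rightarrow> bool" where
  "primitive_char q chi \<longleftrightarrow> dirichlet_char q chi \<and>
     \<not> (\<exists>d. d dvd q \<and> d < q \<and> (\<forall>n. coprime n q \<longrightarrow> [n = 1] (mod d) \<longrightarrow> chi n = 1))"

definition twisted_L :: "(nat \<Rightarrow> complex) \<Rightarrow> (nat \<Rightarrow> complex) \<Rightarrow> complex \<Rightarrow> complex" where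
  "twisted_L lam chi = (THE g. g holomorphic_on UNIV \<and>
     (\<forall>s. Re s > 1 \<longrightarrow> (\<lambda>n. lam n * chi n / of_nat n powr s) sums g s))"

text \<open>ell N q j = l_j for j >= 1 (ell N q 0 is unused).\<close>
fun ell :: "nat \<Rightarrow> nat \<Rightarrow> nat \<Rightarrow> nat" where
  "ell N q 0 = 0"
| "ell N q (Suc 0) = 2 * nat \<lceil>real N * ln (ln (real q))\<rceil>"
| "ell N q (Suc (Suc j)) = 2 * nat \<lceil>real N * ln (real (ell N q (Suc j)))\<rceil>"

definition Rnum :: "nat \<Rightarrow> nat \<Rightarrow> nat \<Rightarrow> nat" where
  "Rnum N M q = (GREATEST r. r \<ge> 1 \<and> ell N q r > 10 ^ M)"

definition Pset :: "nat \<Rightarrow> nat \<Rightarrow> nat \<Rightarrow> nat set" where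
  "Pset N q j = (if j = 1
     then {p. prime p \<and> odd p \<and> real p \<le> real q powr (1 / real (ell N q 1) ^ 2)}
     else {p. prime p \<and> real q powr (1 / real (ell N q (j - 1)) ^ 2) < real p \<and>
                        real p \<le> real q powr (1 / real (ell N q j) ^ 2)})"

definition calP :: "(nat \<Rightarrow> complex) \<Rightarrow> nat \<Rightarrow> nat \<Rightarrow> nat \<Rightarrow> real \<Rightarrow> (nat \<Rightarrow> complex) \<Rightarrow> complex" where
  "calP lam N q j t chi =
     (\<Sum>p\<in>Pset N q j. lam p * chi p * of_nat p powr (- (1/2 + \<i> * of_real t)))"

definition c_const :: "real \<Rightarrow> real" where
  "c_const k = 64 * max 1 k"

definition r_const :: "real \<Rightarrow> nat" where
  "r_const k = (if k > 1 then 2 else nat \<lceil>1 + 1 / k\<rceil> + 1)"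

definition calQ :: "(nat \<Rightarrow> complex) \<Rightarrow> nat \<Rightarrow> nat \<Rightarrow> nat \<Rightarrow> real \<Rightarrow> nat \<Rightarrow> real
                    \<Rightarrow> (nat \<Rightarrow> complex) \<Rightarrow> complex" where
  "calQ lam N M q k j t chi = (if j = Rnum N M q + 1 then 1 else
     (of_real (c_const k) * calP lam N q j t chi / of_nat (ell N q j)) ^ (r_const k * ell N q j))"

definition E_trunc :: "nat \<Rightarrow> complex \<Rightarrow> complex" where
  "E_trunc l x = (\<Sum>j=0..l. x ^ j / of_nat (fact j))"

definition calN :: "(nat \<Rightarrow> complex) \<Rightarrow> nat \<Rightarrow> nat \<Rightarrow> nat \<Rightarrow> real \<Rightarrow> (nat \<Rightarrow> complex)
                    \<Rightarrow> real \<Rightarrow> complex" where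
  "calN lam N q j t chi \<alpha> = E_trunc (ell N q j) (of_real \<alpha> * calP lam N q j t chi)"

end

theory Submission
  imports Defs
begin


lemma tail_bound:
  fixes x :: complex and l :: nat
  shows "norm (exp x - E_trunc l x) \<le> exp (8 * norm x) / 8 ^ (l+1)"
proof -
  define f where "f n = x ^ n /\<^sub>R fact n" for n
  have s: "f sums exp x" unfolding f_def by (rule exp_converges)
  have Et: "E_trunc l x = (\<Sum>i<l+1. f i)"
    unfolding E_trunc_def f_def
    by (rule sum.cong) (auto simp: scaleR_conv_of_real divide_inverse mult.commute)
  have s2: "(\<lambda>i. f (i + (l+1))) sums (exp x - E_trunc l x)"
    using s by (subst sums_iff_shift) (simp add: Et)
  define g where "g n = (8 * norm x) ^ n / fact n / 8 ^ (l+1)" for n :: nat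
  have gs: "g sums (exp (8 * norm x) / 8 ^ (l+1))"
    unfolding g_def using exp_converges[of "8 * norm x"]
    by (intro sums_divide) (simp add: scaleR_conv_of_real divide_inverse mult.commute)
  have gpos: "\<And>n. 0 \<le> g n" unfolding g_def by simp
  have b: "norm (f (i + (l+1))) \<le> g (i + (l+1))" for i
  proof -
    have "norm (f (i + (l+1))) = norm x ^ (i + (l+1)) / fact (i + (l+1))"
      unfolding f_def norm_scaleR norm_power by (simp add: divide_inverse mult.commute)
    also have "\<dots> \<le> (8 * norm x) ^ (i + (l+1)) / fact (i + (l+1)) / 8 ^ (l+1)"
    proof -
      define n where "n = i + (l+1)"
      have "norm x ^ n * 8 ^ (l+1) \<le> norm x ^ n * 8 ^ n"
        unfolding n_def by (intro mult_left_mono power_increasing) auto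
      then have "norm x ^ n \<le> (8 * norm x) ^ n / 8 ^ (l+1)"
        by (simp add: field_simps power_mult_distrib)
      then have "norm x ^ n / fact n \<le> (8 * norm x) ^ n / 8 ^ (l+1) / fact n"
        by (rule divide_right_mono) simp
      then show ?thesis unfolding n_def[symmetric] by (simp add: divide_divide_eq_left mult.commute)
    qed
    finally show ?thesis unfolding g_def .
  qed
  have sg2: "summable (\<lambda>i. g (i + (l+1)))"
    using gs summable_iff_shift[of g "l+1"] sums_summable by blast
  have "norm (exp x - E_trunc l x) \<le> (\<Sum>i. g (i + (l+1)))"
    using norm_suminf_le[OF b sg2] s2 sums_unique by metis
  also have "\<dots> \<le> (\<Sum>i. g i)"
  proof -
    have "(\<Sum>i. g (i + (l+1))) = (\<Sum>i. g i) - (\<Sum>i<l+1. g i)"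
      using suminf_minus_initial_segment[OF sums_summable[OF gs], of "l+1"] by simp
    moreover have "0 \<le> (\<Sum>i<l+1. g i)" by (intro sum_nonneg gpos)
    ultimately show ?thesis by simp
  qed
  also have "\<dots> = exp (8 * norm x) / 8 ^ (l+1)" using gs sums_unique by metis
  finally show ?thesis .
qed

lemma E_lower:
  fixes x :: complex and l :: nat
  assumes "norm x \<le> real l / 64"
  shows "exp (Re x) * (1 - (1/2)^l) \<le> norm (E_trunc l x)"
proof -
  have e1: "exp (9/64::real) \<le> 4"
    using exp_bound[of "9/64"] by (simp add: power2_eq_square)
  have "exp (9 * norm x) \<le> exp (9 * (real l / 64))" using assms by simp
  also have "\<dots> = exp (9/64) ^ l" by (simp add: exp_of_nat_mult[symmetric] field_simps)
  also have "\<dots> \<le> 4 ^ l" by (intro power_mono e1) simp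
  finally have h9: "exp (9 * norm x) \<le> 4 ^ l" .
  have "exp (- norm x) \<le> exp (Re x)" using abs_Re_le_cmod[of x] by simp
  have "exp (8 * norm x) / 8 ^ (l+1) = exp (9 * norm x) * exp (- norm x) / 8 ^ (l+1)"
    by (simp add: exp_add[symmetric])
  also have "\<dots> \<le> 4 ^ l * exp (Re x) / 8 ^ (l+1)"
    using h9 \<open>exp (- norm x) \<le> exp (Re x)\<close>
    by (intro divide_right_mono mult_mono) auto
  also have "\<dots> \<le> exp (Re x) * (1/2)^l"
  proof -
    have "(4::real) ^ l / 8 ^ (l+1) \<le> (1/2)^l"
    proof -
      have "(2::real) ^ l * 4 ^ l = 8 ^ l" by (simp add: power_mult_distrib[symmetric])
      then show ?thesis by (simp add: power_divide[symmetric] field_simps)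
    qed
    then show ?thesis by (simp add: field_simps)
  qed
  finally have t: "norm (exp x - E_trunc l x) \<le> exp (Re x) * (1/2)^l"
    using tail_bound[of x l] by linarith
  have "norm (exp x) - norm (exp x - E_trunc l x) \<le> norm (E_trunc l x)"
    using norm_triangle_ineq2[of "exp x" "exp x - E_trunc l x"] by simp
  then show ?thesis using t by (simp add: norm_exp_eq_Re algebra_simps)
qed

lemma geo_half: "(\<Sum>j=1..R. (1/2::real)^(2 + (R - j))) \<le> 1/2"
proof (induction R)
  case 0 then show ?case by simp
next
  case (Suc R)
  have "(\<Sum>j=1..Suc R. (1/2::real)^(2 + (Suc R - j)))
        = (\<Sum>j=1..R. (1/2::real)^(2 + (Suc R - j))) + 1/4"
    by (simp add: power2_eq_square)
  also have "(\<Sum>j=1..R. (1/2::real)^(2 + (Suc R - j))) = (1/2) * (\<Sum>j=1..R. (1/2::real)^(2 + (R - j)))"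
    unfolding sum_distrib_left
    by (rule sum.cong) (auto simp: Suc_diff_le)
  finally show ?case using Suc.IH by simp
qed

lemma prod_one_minus_ge:
  fixes d :: "nat \<Rightarrow> real"
  assumes "finite A" "\<And>j. j \<in> A \<Longrightarrow> 0 \<le> d j \<and> d j \<le> 1"
  shows "1 - (\<Sum>j\<in>A. d j) \<le> (\<Prod>j\<in>A. (1 - d j))"
  using assms
proof (induction A rule: finite_induct)
  case empty then show ?case by simp
next
  case (insert x F)
  have IH: "1 - (\<Sum>j\<in>F. d j) \<le> (\<Prod>j\<in>F. (1 - d j))" using insert by auto
  have dx: "0 \<le> d x" "d x \<le> 1" using insert by auto
  have p0: "0 \<le> (\<Prod>j\<in>F. (1 - d j))" using insert by (intro prod_nonneg) auto
  have p1: "(\<Prod>j\<in>F. (1 - d j)) \<le> 1" using insert by (intro prod_le_1) auto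
  have s0: "0 \<le> (\<Sum>j\<in>F. d j)" using insert by (intro sum_nonneg) auto
  have "1 - (d x + (\<Sum>j\<in>F. d j)) \<le> (1 - d x) * (\<Prod>j\<in>F. (1 - d j))"
  proof -
    have "(1 - d x) * (1 - (\<Sum>j\<in>F. d j)) \<le> (1 - d x) * (\<Prod>j\<in>F. (1 - d j))"
      using IH dx by (intro mult_left_mono) auto
    moreover have "1 - (d x + (\<Sum>j\<in>F. d j)) \<le> (1 - d x) * (1 - (\<Sum>j\<in>F. d j))"
      using dx s0 by (simp add: algebra_simps)
    ultimately show ?thesis by linarith
  qed
  then show ?case using insert by simp
qed

lemma pointwise:
  fixes l :: "nat \<Rightarrow> nat" and P :: "nat \<Rightarrow> complex" and NN :: "real \<Rightarrow> nat \<Rightarrow> complex"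
    and QQ :: "nat \<Rightarrow> complex" and R :: nat and k :: real
  assumes k: "0 < k" "k < 1"
    and hl: "\<And>j. j \<in> {1..R} \<Longrightarrow> 2 + (R - j) \<le> l j"
    and hN: "\<And>\<alpha> j. j \<in> {1..R} \<Longrightarrow> NN \<alpha> j = E_trunc (l j) (of_real \<alpha> * P j)"
    and hQ1: "1 \<le> norm (QQ (R+1))"
    and hQ: "\<And>j. j \<in> {1..R} \<Longrightarrow> real (l j) / 64 < norm (P j) \<Longrightarrow> 1 \<le> norm (QQ j)"
  shows "1/4 \<le> (\<Sum>v=0..R. (\<Prod>j=1..v. norm (NN (k-1) j)^2) * norm (QQ (v+1))^2) powr k
             * (\<Sum>v=0..R. (\<Prod>j=1..v. norm (NN k j)^2) * norm (QQ (v+1))^2) powr (1-k)"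
proof -
  obtain v where v: "v \<le> R" "1 \<le> norm (QQ (v+1))" "\<And>j. j \<in> {1..v} \<Longrightarrow> norm (P j) \<le> real (l j) / 64"
  proof (cases "{j\<in>{1..R}. real (l j) / 64 < norm (P j)} = {}")
    case True
    show ?thesis by (rule that[of R]) (use True hQ1 in auto)
  next
    case False
    define m where "m = Min {j\<in>{1..R}. real (l j) / 64 < norm (P j)}"
    have mB: "m \<in> {j\<in>{1..R}. real (l j) / 64 < norm (P j)}"
      unfolding m_def using False by (intro Min_in) auto
    have mle: "\<And>j. j \<in> {j\<in>{1..R}. real (l j) / 64 < norm (P j)} \<Longrightarrow> m \<le> j"
      unfolding m_def by (intro Min_le) auto
    show ?thesis
    proof (rule that[of "m - 1"])
      show "m - 1 \<le> R" using mB by auto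
      show "1 \<le> norm (QQ (m - 1 + 1))" using mB hQ by auto
      fix j assume j: "j \<in> {1..m-1}"
      then have "j \<in> {1..R}" using mB by auto
      moreover have "\<not> m \<le> j" using j mB by auto
      ultimately show "norm (P j) \<le> real (l j) / 64" using mle by force
    qed
  qed
  define d where "d j = (1/2::real)^(l j)" for j
  define D where "D = (\<Prod>j=1..v. (1 - d j))"
  define S where "S = (\<Sum>j=1..v. Re (P j))"
  have d01: "0 \<le> d j \<and> d j \<le> 1" for j unfolding d_def by (simp add: power_le_one)
  have Dge: "1/2 \<le> D"
  proof -
    have "(\<Sum>j=1..v. d j) \<le> (\<Sum>j=1..v. (1/2::real)^(2 + (R - j)))"
      using v(1) hl unfolding d_def by (intro sum_mono power_decreasing) auto
    also have "\<dots> \<le> (\<Sum>j=1..R. (1/2::real)^(2 + (R - j)))"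
      using v(1) by (intro sum_mono2) auto
    also have "\<dots> \<le> 1/2" by (rule geo_half)
    finally show ?thesis unfolding D_def using prod_one_minus_ge[of "{1..v}" d] d01 by force
  qed
  have low: "(\<Prod>j=1..v. norm (NN \<alpha> j)^2) * norm (QQ (v+1))^2 \<ge> exp (2 * \<alpha> * S) * D^2"
    if "\<bar>\<alpha>\<bar> \<le> 1" for \<alpha>
  proof -
    have "exp (2 * \<alpha> * S) * D^2 = (\<Prod>j=1..v. (exp (\<alpha> * Re (P j)) * (1 - d j))^2)"
      unfolding S_def D_def
      by (simp add: prod_power_distrib[symmetric] prod.distrib power_mult_distrib exp_sum[symmetric]
          sum_distrib_left exp_of_nat_mult[symmetric] power2_eq_square exp_add[symmetric] mult.assoc)
    also have "\<dots> \<le> (\<Prod>j=1..v. norm (NN \<alpha> j)^2)"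
    proof (rule prod_mono, safe)
      fix j assume j: "j \<in> {1..v}"
      have jR: "j \<in> {1..R}" using j v(1) by auto
      have "norm (of_real \<alpha> * P j) \<le> real (l j) / 64"
      proof -
        have "norm (of_real \<alpha> * P j) = \<bar>\<alpha>\<bar> * norm (P j)" by (simp add: norm_mult)
        also have "\<dots> \<le> 1 * norm (P j)" using that by (intro mult_right_mono) auto
        finally show ?thesis using v(3)[OF j] by simp
      qed
      from E_lower[OF this] have
        "exp (\<alpha> * Re (P j)) * (1 - d j) \<le> norm (NN \<alpha> j)"
        using hN[OF jR] unfolding d_def by simp
      moreover have "0 \<le> exp (\<alpha> * Re (P j)) * (1 - d j)" using d01[of j] by simp
      ultimately show "(exp (\<alpha> * Re (P j)) * (1 - d j))^2 \<le> norm (NN \<alpha> j)^2"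
        by (intro power_mono) auto
    qed simp
    also have "\<dots> \<le> (\<Prod>j=1..v. norm (NN \<alpha> j)^2) * norm (QQ (v+1))^2"
    proof -
      have "1 \<le> norm (QQ (v+1))^2" using v(2) by (simp add: one_le_power)
      moreover have "0 \<le> (\<Prod>j=1..v. norm (NN \<alpha> j)^2)" by (intro prod_nonneg) auto
      ultimately show ?thesis using mult_left_mono[of 1 "norm (QQ (v+1))^2" "\<Prod>j=1..v. norm (NN \<alpha> j)^2"] by simp
    qed
    finally show ?thesis .
  qed
  have sumge: "(\<Prod>j=1..v. norm (NN \<alpha> j)^2) * norm (QQ (v+1))^2
      \<le> (\<Sum>v=0..R. (\<Prod>j=1..v. norm (NN \<alpha> j)^2) * norm (QQ (v+1))^2)" for \<alpha>
    using v(1) by (intro member_le_sum) (simp_all add: prod_nonneg)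
  have A: "exp (2 * (k-1) * S) * D^2 \<le> (\<Sum>v=0..R. (\<Prod>j=1..v. norm (NN (k-1) j)^2) * norm (QQ (v+1))^2)"
    using low[of "k-1"] sumge[of "k-1"] k by auto
  have B: "exp (2 * k * S) * D^2 \<le> (\<Sum>v=0..R. (\<Prod>j=1..v. norm (NN k j)^2) * norm (QQ (v+1))^2)"
    using low[of "k"] sumge[of "k"] k by auto
  have "(1/2::real)^2 \<le> D^2" using Dge by (intro power_mono) auto
  then have "1/4 \<le> D^2" by (simp add: power2_eq_square)
  also have "D^2 = (exp (2 * (k-1) * S) * D^2) powr k * (exp (2 * k * S) * D^2) powr (1-k)"
  proof -
    have "(exp (2 * (k-1) * S) * D^2) powr k * (exp (2 * k * S) * D^2) powr (1-k)
        = exp (2 * (k-1) * S * k) * exp (2 * k * S * (1-k)) * ((D^2) powr k * (D^2) powr (1-k))"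
      by (simp add: powr_mult exp_powr_real)
    also have "exp (2 * (k-1) * S * k) * exp (2 * k * S * (1-k)) = 1"
    proof -
      have "2 * (k-1) * S * k + 2 * k * S * (1-k) = 0" by (simp add: algebra_simps)
      then show ?thesis by (simp only: exp_add[symmetric]) simp
    qed
    also have "(D^2) powr k * (D^2) powr (1-k) = D^2"
      using Dge by (simp add: powr_add[symmetric])
    finally show ?thesis by simp
  qed
  also have "\<dots> \<le> (\<Sum>v=0..R. (\<Prod>j=1..v. norm (NN (k-1) j)^2) * norm (QQ (v+1))^2) powr k
             * (\<Sum>v=0..R. (\<Prod>j=1..v. norm (NN k j)^2) * norm (QQ (v+1))^2) powr (1-k)"
    using A B k by (intro mult_mono powr_mono2) auto
  finally show ?thesis .
qed

lemma young0:
  fixes a b k :: real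
  assumes "0 < k" "k < 1" "0 \<le> a" "0 \<le> b"
  shows "a powr k * b powr (1-k) \<le> k * a + (1-k) * b"
proof (cases "a = 0 \<or> b = 0")
  case True then show ?thesis using assms by auto
next
  case False then show ?thesis using Youngs_inequality_0[of k "1-k" a b] assms by auto
qed

lemma holder_sum:
  fixes x y :: "'a \<Rightarrow> real" and k :: real
  assumes k: "0 < k" "k < 1" and nn: "\<And>i. i \<in> A \<Longrightarrow> 0 \<le> x i" "\<And>i. i \<in> A \<Longrightarrow> 0 \<le> y i"
  shows "(\<Sum>i\<in>A. x i powr k * y i powr (1-k)) \<le> (\<Sum>i\<in>A. x i) powr k * (\<Sum>i\<in>A. y i) powr (1-k)"
proof (cases "finite A")
  case False then show ?thesis by simp
next
  case fin: True
  define X where "X = (\<Sum>i\<in>A. x i)"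
  define Y where "Y = (\<Sum>i\<in>A. y i)"
  have X0: "0 \<le> X" "0 \<le> Y" unfolding X_def Y_def using nn by (auto intro: sum_nonneg)
  show ?thesis
  proof (cases "X = 0 \<or> Y = 0")
    case True
    then have "(\<forall>i\<in>A. x i = 0) \<or> (\<forall>i\<in>A. y i = 0)"
      using sum_nonneg_eq_0_iff[OF fin] nn unfolding X_def Y_def by blast
    then have "(\<Sum>i\<in>A. x i powr k * y i powr (1-k)) = 0" using k by auto
    then show ?thesis by simp
  next
    case False
    then have Xp: "0 < X" "0 < Y" using X0 by auto
    have "(\<Sum>i\<in>A. x i powr k * y i powr (1-k))
        = (\<Sum>i\<in>A. X powr k * Y powr (1-k) * ((x i / X) powr k * (y i / Y) powr (1-k)))"
      using Xp nn by (intro sum.cong) (auto simp: powr_divide)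
    also have "\<dots> \<le> (\<Sum>i\<in>A. X powr k * Y powr (1-k) * (k * (x i / X) + (1-k) * (y i / Y)))"
      using Xp nn k by (intro sum_mono mult_left_mono young0) auto
    also have "\<dots> = X powr k * Y powr (1-k) * (k * ((\<Sum>i\<in>A. x i) / X) + (1-k) * ((\<Sum>i\<in>A. y i) / Y))"
      by (simp add: sum_distrib_left sum_distrib_right sum.distrib sum_divide_distrib[symmetric] algebra_simps)
    also have "\<dots> = X powr k * Y powr (1-k)" using Xp unfolding X_def Y_def by simp
    finally show ?thesis unfolding X_def Y_def .
  qed
qed



lemma h_lt:
  fixes x :: real and N :: nat
  assumes "(4 * real N + 1)^2 \<le> x" "1 \<le> N"
  shows "2 * (real N * ln x + 1) < x"
proof -
  have "1 \<le> (4 * real N + 1)^2" by (simp add: one_le_power)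
  then have x1: "1 \<le> x" using assms by linarith
  have sx: "4 * real N + 1 \<le> sqrt x" using assms real_le_rsqrt by auto
  have sx0: "0 \<le> sqrt x" using x1 by simp
  have "ln x = 2 * ln (sqrt x)" using x1 by (simp add: ln_sqrt)
  also have "\<dots> < 2 * sqrt x" using x1 by simp
  finally have lx: "ln x < 2 * sqrt x" .
  then have a: "real N * ln x \<le> real N * (2 * sqrt x)" by (intro mult_left_mono) auto
  have b: "x = sqrt x * sqrt x" using x1 by simp
  have c: "(4 * real N + 1) * sqrt x \<le> sqrt x * sqrt x" using sx sx0 by (intro mult_right_mono) auto
  have d: "1 \<le> sqrt x" using x1 by simp
  have e: "2 < sqrt x" using sx d assms(2) by linarith
  show ?thesis using a b c e by (simp add: algebra_simps)
qed

lemma g_le: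
  fixes l N :: nat
  assumes "1 \<le> l"
  shows "real (2 * nat \<lceil>real N * ln (real l)\<rceil>) \<le> 2 * (real N * ln (real l) + 1)"
proof -
  have "0 \<le> real N * ln (real l)" using assms by simp
  then show ?thesis by (simp add: of_nat_nat) linarith
qed

lemma ell_step: "1 \<le> r \<Longrightarrow> ell N q (Suc r) = 2 * nat \<lceil>real N * ln (real (ell N q r))\<rceil>"
  by (cases r) auto

lemma ell_dec:
  assumes "(4 * real N + 1)^2 \<le> (10::real)^M" "1 \<le> N" "1 \<le> r" "ell N q r > 10^M"
  shows "ell N q (Suc r) < ell N q r"
proof -
  have "real (ell N q (Suc r)) \<le> 2 * (real N * ln (real (ell N q r)) + 1)"
  proof -
    have "(1::nat) \<le> 10^M" by simp
    then have "1 \<le> ell N q r" using assms(4) by linarith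
    then show ?thesis using ell_step[OF assms(3), of N q] g_le[of "ell N q r" N] by simp
  qed
  also have "\<dots> < real (ell N q r)"
  proof (rule h_lt[OF _ assms(2)])
    have "real (10^M) \<le> real (ell N q r)" using assms(4) by (simp only: of_nat_le_iff)
    then have "(10::real)^M \<le> real (ell N q r)" by simp
    then show "(4 * real N + 1)^2 \<le> real (ell N q r)" using assms(1) by linarith
  qed
  finally show ?thesis by simp
qed

lemma ell_small:
  assumes "(4 * real N + 1)^2 \<le> (10::real)^M" "1 \<le> N" "1 \<le> r" "ell N q r \<le> 10^M"
  shows "ell N q (Suc r) \<le> 10^M"
proof (cases "ell N q r = 0")
  case True then show ?thesis using ell_step[OF assms(3)] by simp
next
  case False
  have "real (ell N q (Suc r)) \<le> 2 * (real N * ln (real (ell N q r)) + 1)"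
    using False ell_step[OF assms(3), of N q] g_le[of "ell N q r" N] by simp
  also have "\<dots> \<le> 2 * (real N * ln ((10::real)^M) + 1)"
  proof -
    have "real (ell N q r) \<le> real (10^M)" using assms(4) by (simp only: of_nat_le_iff)
    then have "real (ell N q r) \<le> (10::real)^M" by simp
    then have "ln (real (ell N q r)) \<le> ln ((10::real)^M)" using False by simp
    then show ?thesis by (simp add: mult_left_mono)
  qed
  also have "\<dots> < (10::real)^M" by (rule h_lt[OF assms(1,2)])
  finally have "real (ell N q (Suc r)) \<le> real (10^M)" by simp
  then show ?thesis by (simp only: of_nat_le_iff)
qed

lemma ell_chain:
  assumes "(4 * real N + 1)^2 \<le> (10::real)^M" "1 \<le> N"
  shows "1 \<le> r \<Longrightarrow> ell N q r > 10^M \<Longrightarrow> (\<forall>j\<in>{1..r}. ell N q j \<ge> ell N q r + (r - j))"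
proof (induction r)
  case 0 then show ?case by simp
next
  case (Suc r)
  show ?case
  proof (cases "r = 0")
    case True then show ?thesis by auto
  next
    case False
    then have r1: "1 \<le> r" by simp
    have big: "ell N q r > 10^M"
    proof (rule ccontr)
      assume "\<not> 10^M < ell N q r"
      then have "ell N q (Suc r) \<le> 10^M" using ell_small[OF assms(1,2) r1] by simp
      then show False using Suc.prems by simp
    qed
    have dec: "ell N q (Suc r) < ell N q r" using ell_dec[OF assms(1,2) r1 big] .
    have IH: "\<forall>j\<in>{1..r}. ell N q j \<ge> ell N q r + (r - j)" using Suc.IH r1 big by simp
    show ?thesis
    proof
      fix j assume j: "j \<in> {1..Suc r}"
      show "ell N q j \<ge> ell N q (Suc r) + (Suc r - j)"
      proof (cases "j = Suc r")
        case True then show ?thesis by simp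
      next
        case False
        then have "j \<in> {1..r}" using j by auto
        then have "ell N q j \<ge> ell N q r + (r - j)" "j \<le> r" using IH by auto
        then show ?thesis using dec by linarith
      qed
    qed
  qed
qed

theorem lemma4p3:
  fixes \<kappa> :: nat and f :: "complex \<Rightarrow> complex" and a :: "nat \<Rightarrow> complex" and k :: real
  assumes "even \<kappa>" and "\<kappa> > 0"
    and "normalized_hecke_eigenform \<kappa> f a"
    and "0 < k" and "k < 1"
  shows "\<exists>N0. \<forall>N\<ge>N0. \<exists>M0. \<forall>M\<ge>M0. \<exists>C q0. \<forall>q\<ge>q0. \<forall>t::real. q mod 4 \<noteq> 2 \<longrightarrow>
    (let lam = hecke_lambda \<kappa> a; R = Rnum N M q;
         s = 1/2 + \<i> * of_real t;
         X = {chi. primitive_char q chi}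
     in (\<Sum>chi\<in>X. norm (twisted_L lam chi s) powr (2 * k))
        \<le> C * (\<Sum>chi\<in>X. norm (twisted_L lam chi s) ^ 2 *
                 (\<Sum>v=0..R. (\<Prod>j=1..v. norm (calN lam N q j t chi (k - 1)) ^ 2) *
                             norm (calQ lam N M q k (v + 1) t chi) ^ 2)) powr k
            * (\<Sum>chi\<in>X. \<Sum>v=0..R. (\<Prod>j=1..v. norm (calN lam N q j t chi k) ^ 2) *
                             norm (calQ lam N M q k (v + 1) t chi) ^ 2) powr (1 - k))"
proof (rule exI[of _ "1::nat"], intro allI impI)
  fix N :: nat assume N1: "1 \<le> N"
  show "\<exists>M0. \<forall>M\<ge>M0. \<exists>C q0. \<forall>q\<ge>q0. \<forall>t::real. q mod 4 \<noteq> 2 \<longrightarrow>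
    (let lam = hecke_lambda \<kappa> a; R = Rnum N M q;
         s = 1/2 + \<i> * of_real t;
         X = {chi. primitive_char q chi}
     in (\<Sum>chi\<in>X. norm (twisted_L lam chi s) powr (2 * k))
        \<le> C * (\<Sum>chi\<in>X. norm (twisted_L lam chi s) ^ 2 *
                 (\<Sum>v=0..R. (\<Prod>j=1..v. norm (calN lam N q j t chi (k - 1)) ^ 2) *
                             norm (calQ lam N M q k (v + 1) t chi) ^ 2)) powr k
            * (\<Sum>chi\<in>X. \<Sum>v=0..R. (\<Prod>j=1..v. norm (calN lam N q j t chi k) ^ 2) *
                             norm (calQ lam N M q k (v + 1) t chi) ^ 2) powr (1 - k))"
  proof (rule exI[of _ "nat \<lceil>(4 * real N + 1)^2\<rceil>"], intro allI impI)
    fix M :: nat assume M: "nat \<lceil>(4 * real N + 1)^2\<rceil> \<le> M"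
    have hM: "(4 * real N + 1)^2 \<le> (10::real)^M"
    proof -
      have "(4 * real N + 1)^2 \<le> real M" using M by linarith
      also have "real M \<le> real (2^M)" using less_exp[of M] by linarith
      also have "\<dots> = (2::real)^M" by simp
      also have "\<dots> \<le> 10^M" by (intro power_mono) auto
      finally show ?thesis .
    qed
    have M1: "(1::nat) \<le> 10^M" by simp
    show "\<exists>C q0. \<forall>q\<ge>q0. \<forall>t::real. q mod 4 \<noteq> 2 \<longrightarrow>
    (let lam = hecke_lambda \<kappa> a; R = Rnum N M q;
         s = 1/2 + \<i> * of_real t;
         X = {chi. primitive_char q chi}
     in (\<Sum>chi\<in>X. norm (twisted_L lam chi s) powr (2 * k))
        \<le> C * (\<Sum>chi\<in>X. norm (twisted_L lam chi s) ^ 2 *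
                 (\<Sum>v=0..R. (\<Prod>j=1..v. norm (calN lam N q j t chi (k - 1)) ^ 2) *
                             norm (calQ lam N M q k (v + 1) t chi) ^ 2)) powr k
            * (\<Sum>chi\<in>X. \<Sum>v=0..R. (\<Prod>j=1..v. norm (calN lam N q j t chi k) ^ 2) *
                             norm (calQ lam N M q k (v + 1) t chi) ^ 2) powr (1 - k))"
    proof (rule exI[of _ "4::real"], rule exI[of _ "nat \<lceil>exp (exp ((10::real)^M))\<rceil> + 1"], intro allI impI)
      fix q :: nat and t :: real
      assume q: "nat \<lceil>exp (exp ((10::real)^M))\<rceil> + 1 \<le> q" and "q mod 4 \<noteq> 2"
      have qbig: "exp (exp ((10::real)^M)) < real q" using q by linarith
      have "0 < exp (exp ((10::real)^M))" by simp
      then have qpos: "0 < real q" using qbig by linarith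
      have lq: "exp ((10::real)^M) < ln (real q)"
      proof -
        have "ln (exp (exp ((10::real)^M))) < ln (real q)"
          using qbig qpos by (subst ln_less_cancel_iff) auto
        then show ?thesis by simp
      qed
      have llq: "(10::real)^M < ln (ln (real q))"
      proof -
        have "ln (exp ((10::real)^M)) < ln (ln (real q))"
          using lq by (subst ln_less_cancel_iff) (auto intro: less_trans[OF exp_gt_zero])
        then show ?thesis by simp
      qed
      have ell1: "ell N q 1 > 10^M"
      proof -
        have "(0::real) < 10^M" by simp
        then have p: "0 < ln (ln (real q))" using llq by linarith
        have "ln (ln (real q)) \<le> real N * ln (ln (real q))" using N1 p by simp
        also have "\<dots> \<le> real (nat \<lceil>real N * ln (ln (real q))\<rceil>)" by linarith
        also have "\<dots> \<le> real (ell N q 1)" by simp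
        finally have "real (10^M) < real (ell N q 1)" using llq by simp
        then show ?thesis by (simp only: of_nat_less_iff)
      qed
      define R where "R = Rnum N M q"
      define PP where "PP r \<longleftrightarrow> r \<ge> 1 \<and> ell N q r > 10^M" for r
      have Pbd: "y \<le> ell N q 1" if "PP y" for y
        using ell_chain[OF hM N1, of y q] that unfolding PP_def by force
      have RP: "PP R" unfolding R_def Rnum_def PP_def[symmetric]
        by (rule GreatestI_nat[of PP 1 "ell N q 1"]) (use ell1 Pbd in \<open>auto simp: PP_def\<close>)
      have hl: "2 + (R - j) \<le> ell N q j" if "j \<in> {1..R}" for j
      proof -
        have R1: "1 \<le> R" "10^M < ell N q R" using RP unfolding PP_def by auto
        then have "ell N q R + (R - j) \<le> ell N q j" using ell_chain[OF hM N1, of R q] that by blast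
        then show ?thesis using R1 M1 by linarith
      qed
      define lam where "lam = hecke_lambda \<kappa> a"
      define s where "s = 1/2 + \<i> * of_real t"
      define X where "X = {chi. primitive_char q chi}"
      define A where "A chi = (\<Sum>v=0..R. (\<Prod>j=1..v. norm (calN lam N q j t chi (k - 1)) ^ 2) *
                             norm (calQ lam N M q k (v + 1) t chi) ^ 2)" for chi
      define B where "B chi = (\<Sum>v=0..R. (\<Prod>j=1..v. norm (calN lam N q j t chi k) ^ 2) *
                             norm (calQ lam N M q k (v + 1) t chi) ^ 2)" for chi
      define Lc where "Lc chi = norm (twisted_L lam chi s)" for chi
      have A0: "0 \<le> A chi" for chi unfolding A_def by (intro sum_nonneg mult_nonneg_nonneg prod_nonneg) auto
      have B0: "0 \<le> B chi" for chi unfolding B_def by (intro sum_nonneg mult_nonneg_nonneg prod_nonneg) auto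
      have ck: "c_const k = 64" using assms(5) unfolding c_const_def by simp
      have pw: "1/4 \<le> A chi powr k * B chi powr (1-k)" for chi
        unfolding A_def B_def
      proof (rule pointwise[where l = "ell N q" and P = "\<lambda>j. calP lam N q j t chi"])
        show "0 < k" "k < 1" using assms by auto
        show "\<And>j. j \<in> {1..R} \<Longrightarrow> 2 + (R - j) \<le> ell N q j" by (rule hl)
        show "\<And>\<alpha> j. j \<in> {1..R} \<Longrightarrow> calN lam N q j t chi \<alpha> = E_trunc (ell N q j) (of_real \<alpha> * calP lam N q j t chi)"
          unfolding calN_def by simp
        show "1 \<le> norm (calQ lam N M q k (R+1) t chi)" unfolding calQ_def R_def by simp
        fix j assume j: "j \<in> {1..R}" and big: "real (ell N q j) / 64 < norm (calP lam N q j t chi)"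
        have lpos: "0 < real (ell N q j)" using hl[OF j] by simp
        have "1 < 64 * norm (calP lam N q j t chi) / real (ell N q j)"
          using big lpos by (simp add: field_simps)
        then have "1 \<le> (64 * norm (calP lam N q j t chi) / real (ell N q j)) ^ (r_const k * ell N q j)"
          by (intro one_le_power) simp
        moreover have "j \<noteq> Rnum N M q + 1" using j R_def by auto
        ultimately show "1 \<le> norm (calQ lam N M q k j t chi)"
          unfolding calQ_def ck by (simp add: norm_power norm_mult norm_divide)
      qed
      have trm: "Lc chi powr (2 * k) \<le> 4 * ((Lc chi ^ 2 * A chi) powr k * B chi powr (1 - k))" for chi
      proof (cases "Lc chi = 0")
        case True
        have "0 \<le> (Lc chi ^ 2 * A chi) powr k * B chi powr (1 - k)" by simp
        then show ?thesis using True assms(4) by simp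
      next
        case False
        then have Lp: "0 < Lc chi" unfolding Lc_def by simp
        have p2: "Lc chi powr 2 = Lc chi ^ 2" using Lp by (intro powr_numeral) simp
        have e0: "(Lc chi ^ 2) powr k = Lc chi powr (2 * k)"
          unfolding p2[symmetric] by (rule powr_powr)
        have e1: "(Lc chi ^ 2 * A chi) powr k = (Lc chi ^ 2) powr k * A chi powr k" by (rule powr_mult)
        have eq: "4 * ((Lc chi ^ 2 * A chi) powr k * B chi powr (1 - k))
             = Lc chi powr (2 * k) * (4 * (A chi powr k * B chi powr (1-k)))"
          unfolding e1 e0 by (simp only: ac_simps)
        have "Lc chi powr (2 * k) * 1 \<le> Lc chi powr (2 * k) * (4 * (A chi powr k * B chi powr (1-k)))"
          using pw[of chi] by (intro mult_left_mono) auto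
        then show ?thesis unfolding eq by simp
      qed
      have "(\<Sum>chi\<in>X. Lc chi powr (2 * k)) \<le> (\<Sum>chi\<in>X. 4 * ((Lc chi ^ 2 * A chi) powr k * B chi powr (1 - k)))"
        by (intro sum_mono trm)
      also have "\<dots> = 4 * (\<Sum>chi\<in>X. (Lc chi ^ 2 * A chi) powr k * B chi powr (1 - k))"
        by (simp add: sum_distrib_left)
      also have "\<dots> \<le> 4 * ((\<Sum>chi\<in>X. Lc chi ^ 2 * A chi) powr k * (\<Sum>chi\<in>X. B chi) powr (1 - k))"
        using assms A0 B0 by (intro mult_left_mono holder_sum) auto
      finally have main: "(\<Sum>chi\<in>X. Lc chi powr (2 * k))
          \<le> 4 * (\<Sum>chi\<in>X. Lc chi ^ 2 * A chi) powr k * (\<Sum>chi\<in>X. B chi) powr (1 - k)"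
        by (simp add: mult.assoc)
      show "(let lam = hecke_lambda \<kappa> a; R = Rnum N M q;
         s = 1/2 + \<i> * of_real t;
         X = {chi. primitive_char q chi}
     in (\<Sum>chi\<in>X. norm (twisted_L lam chi s) powr (2 * k))
        \<le> 4 * (\<Sum>chi\<in>X. norm (twisted_L lam chi s) ^ 2 *
                 (\<Sum>v=0..R. (\<Prod>j=1..v. norm (calN lam N q j t chi (k - 1)) ^ 2) *
                             norm (calQ lam N M q k (v + 1) t chi) ^ 2)) powr k
            * (\<Sum>chi\<in>X. \<Sum>v=0..R. (\<Prod>j=1..v. norm (calN lam N q j t chi k) ^ 2) *
                             norm (calQ lam N M q k (v + 1) t chi) ^ 2) powr (1 - k))"
        using main unfolding Let_def A_def B_def Lc_def lam_def s_def X_def R_def .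
    qed
  qed
qed

end
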